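(* Let $\mathcal{C}\subset\mathbb{R}^n$ be a bounded open convex set with Hilbert distance $d_{\mathcal{C}}$ and Finsler norm $\|\cdot\|_{\mathcal{C}}$, let $x\in\mathcal{C}$ and $R>0$. Then $$\left(\frac{e^{2R}-1}{2Re^{2R}}\right)^n\leq\frac{\mathrm{vol}_e B_R(x)}{\mathrm{vol}_e TB_R(x)}\leq\left(\frac{e^{2R}-1}{2R}\right)^n,$$ where $\mathrm{vol}_e$ is the Euclidean volume.
   Context: $d_{\mathcal{C}}(p,q)=\frac12\ln\Big(\frac{\|q-a\|_e}{\|p-a\|_e}\cdot\frac{\|p-b\|_e}{\|q-b\|_e}\Big)$, where the line through distinct $p,q$ meets $\partial\mathcal{C}$ in $a,b$ with $a,p,q,b$ in this order. Finsler norm $\|u\|_{\mathcal{C}}=\frac12\|u\|_e\big(\frac1{\|p-p^+\|_e}+\frac1{\|p-p^-\|_e}\big)$ for $u\in T_p\mathcal{C}=\mathbb{R}^n$, $p^\pm$ the intersections of the line $p+\mathbb{R}u$ with $\partial\mathcal{C}$. $B_R(x)=\{y\in\mathcal{C}:d_{\mathcal{C}}(x,y)<R\}$ and $TB_R(x)=\{u\in\mathbb{R}^n:\|u\|_{\mathcal{C}}<R\}$ (norm taken at the point $x$), both subsets of $\mathbb{R}^n$. *)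

theory Defs
  imports "HOL-Analysis.Analysis"
begin

definition line_tmax :: "'a::euclidean_space set \<Rightarrow> 'a \<Rightarrow> 'a \<Rightarrow> real" where
  "line_tmax C p u = Sup {t. p + t *\<^sub>R u \<in> C}"

definition line_tmin :: "'a::euclidean_space set \<Rightarrow> 'a \<Rightarrow> 'a \<Rightarrow> real" where
  "line_tmin C p u = Inf {t. p + t *\<^sub>R u \<in> C}"

text \<open>Hilbert distance: a = endpoint beyond p, b = endpoint beyond q, order a,p,q,b.\<close>
definition hilbert_dist :: "'a::euclidean_space set \<Rightarrow> 'a \<Rightarrow> 'a \<Rightarrow> real" where
  "hilbert_dist C p q =
     (if p = q then 0 else
        (let a = p + line_tmin C p (q - p) *\<^sub>R (q - p);
             b = p + line_tmax C p (q - p) *\<^sub>R (q - p)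
         in ln ((norm (q - a) / norm (p - a)) * (norm (p - b) / norm (q - b))) / 2))"

definition finsler_norm :: "'a::euclidean_space set \<Rightarrow> 'a \<Rightarrow> 'a \<Rightarrow> real" where
  "finsler_norm C p u =
     (if u = 0 then 0 else
        (let pp = p + line_tmax C p u *\<^sub>R u;
             pm = p + line_tmin C p u *\<^sub>R u
         in norm u * (1 / norm (p - pp) + 1 / norm (p - pm)) / 2))"

definition hilbert_ball :: "'a::euclidean_space set \<Rightarrow> 'a \<Rightarrow> real \<Rightarrow> 'a set" where
  "hilbert_ball C x R = {y \<in> C. hilbert_dist C x y < R}"

definition tangent_ball :: "'a::euclidean_space set \<Rightarrow> 'a \<Rightarrow> real \<Rightarrow> 'a set" where
  "tangent_ball C x R = {u. finsler_norm C x u < R}"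

end

theory Submission imports Defs begin

lemma interval_eq:
  fixes a b c d :: real
  assumes "\<And>t. (a < t \<and> t < b) \<longleftrightarrow> (c < t \<and> t < d)" "a < b" "c < d"
  shows "a = c \<and> b = d"
proof -
  have "a = c"
  proof (rule ccontr)
    assume "a \<noteq> c"
    then show False
    proof (cases "a < c")
      case True
      then show ?thesis using assms(1)[of "(a + min b c)/2"] assms(2,3) by (auto simp: min_def split: if_splits)
    next
      case False
      then show ?thesis using assms(1)[of "(c + min d a)/2"] assms(2,3) \<open>a \<noteq> c\<close> by (auto simp: min_def split: if_splits)
    qed
  qed
  moreover have "b = d"
  proof (rule ccontr)
    assume "b \<noteq> d"
    then show False
    proof (cases "b < d")
      case True
      then show ?thesis using assms(1)[of "(max b c + d)/2"] assms(2,3) by (auto simp: max_def split: if_splits)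
    next
      case False
      then show ?thesis using assms(1)[of "(max d a + b)/2"] assms(2,3) \<open>b \<noteq> d\<close> by (auto simp: max_def split: if_splits)
    qed
  qed
  ultimately show ?thesis by blast
qed

lemma line_interval:
  fixes C :: "'a::euclidean_space set"
  assumes "bounded C" "open C" "convex C" "x \<in> C" "v \<noteq> 0"
  shows "line_tmin C x v < 0 \<and> 0 < line_tmax C x v \<and>
    (\<forall>t. x + t *\<^sub>R v \<in> C \<longleftrightarrow> line_tmin C x v < t \<and> t < line_tmax C x v)"
proof -
  define S where "S = {t. x + t *\<^sub>R v \<in> C}"
  have S0: "0 \<in> S" using assms by (simp add: S_def)
  have oS: "open S"
  proof -
    have "S = (\<lambda>t. x + t *\<^sub>R v) -` C" by (auto simp: S_def)
    moreover have "open ((\<lambda>t. x + t *\<^sub>R v) -` C)"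
      by (rule continuous_open_vimage[OF assms(2)]) (intro continuous_intros)
    ultimately show ?thesis by simp
  qed
  have cS: "convex S"
  proof -
    have "S = (\<lambda>t. x + t *\<^sub>R v) -` C" by (auto simp: S_def)
    moreover have "convex ((\<lambda>t. x + t *\<^sub>R v) -` C)"
    proof (rule convexI)
      fix a b u w :: real
      assume h: "a \<in> (\<lambda>t. x + t *\<^sub>R v) -` C" "b \<in> (\<lambda>t. x + t *\<^sub>R v) -` C" "0 \<le> u" "0 \<le> w" "u + w = 1"
      have "x + (u * a + w * b) *\<^sub>R v = u *\<^sub>R (x + a *\<^sub>R v) + w *\<^sub>R (x + b *\<^sub>R v)"
        using h(5) by (simp add: algebra_simps scaleR_add_left[symmetric] del: scaleR_add_left)
      also have "\<dots> \<in> C" using h assms(3) by (auto intro: convexD)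
      finally show "u *\<^sub>R a + w *\<^sub>R b \<in> (\<lambda>t. x + t *\<^sub>R v) -` C" by simp
    qed
    ultimately show ?thesis by simp
  qed
  obtain B where B: "B > 0" "\<And>y. y \<in> C \<Longrightarrow> norm y \<le> B" using assms(1) bounded_pos by blast
  have bS: "\<bar>t\<bar> \<le> 2 * B / norm v" if "t \<in> S" for t
  proof -
    have "norm (t *\<^sub>R v) \<le> norm (x + t *\<^sub>R v) + norm x" by (metis add_diff_cancel_left' norm_triangle_ineq4 add.commute)
    also have "\<dots> \<le> 2 * B" using B(2)[of "x + t *\<^sub>R v"] B(2)[of x] that assms(4) by (auto simp: S_def)
    finally have "\<bar>t\<bar> * norm v \<le> 2 * B" by simp
    then show ?thesis using assms(5) by (simp add: field_simps)
  qed
  have ba: "bdd_above S" using bS by (intro bdd_aboveI[of _ "2*B/norm v"]) (auto simp: abs_le_iff)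
  have bb: "bdd_below S"
  proof (intro bdd_belowI[of _ "-(2*B/norm v)"])
    fix t assume "t \<in> S"
    from bS[OF this] show "- (2 * B / norm v) \<le> t" by linarith
  qed
  have lt_sup: "t < Sup S" if tS: "t \<in> S" for t
  proof -
    obtain e where e: "e > 0" "ball t e \<subseteq> S" using open_contains_ball[THEN iffD1, OF oS, rule_format, OF tS] by blast
    have "t + e/2 \<in> ball t e" using e(1) by (simp add: dist_real_def)
    then have "t + e/2 \<in> S" using e(2) by blast
    then have "t + e/2 \<le> Sup S" using ba by (rule cSup_upper)
    then show ?thesis using e by simp
  qed
  have gt_inf: "Inf S < t" if tS: "t \<in> S" for t
  proof -
    obtain e where e: "e > 0" "ball t e \<subseteq> S" using open_contains_ball[THEN iffD1, OF oS, rule_format, OF tS] by blast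
    have "t - e/2 \<in> ball t e" using e(1) by (simp add: dist_real_def)
    then have "t - e/2 \<in> S" using e(2) by blast
    then have "Inf S \<le> t - e/2" using bb by (rule cInf_lower)
    then show ?thesis using e by simp
  qed
  have inS: "t \<in> S" if tI: "Inf S < t" "t < Sup S" for t
  proof -
    obtain a where a: "a \<in> S" "a < t" using tI(1) S0 cInf_less_iff[of S t] bb by blast
    obtain b where b: "b \<in> S" "t < b" using tI(2) S0 less_cSup_iff[of S t] ba by blast
    have "is_interval S" using cS by (simp add: is_interval_convex_1)
    then show ?thesis using a b unfolding is_interval_1 by (meson less_imp_le)
  qed
  have e1: "line_tmin C x v = Inf S" by (simp add: line_tmin_def S_def)
  have e2: "line_tmax C x v = Sup S" by (simp add: line_tmax_def S_def)
  have "x + t *\<^sub>R v \<in> C \<longleftrightarrow> t \<in> S" for t by (simp add: S_def)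
  then show ?thesis unfolding e1 e2 using S0 lt_sup gt_inf inS by meson
qed


lemma line_interval':
  fixes C :: "'a::euclidean_space set"
  assumes "bounded C" "open C" "convex C" "x \<in> C" "v \<noteq> 0"
  shows "line_tmin C x v < 0" "0 < line_tmax C x v"
    "x + t *\<^sub>R v \<in> C \<longleftrightarrow> line_tmin C x v < t \<and> t < line_tmax C x v"
proof -
  note L = line_interval[OF assms]
  show "line_tmin C x v < 0" using L by (rule conjunct1)
  show "0 < line_tmax C x v" using L by (rule conjunct1[OF conjunct2])
  show "x + t *\<^sub>R v \<in> C \<longleftrightarrow> line_tmin C x v < t \<and> t < line_tmax C x v"
    using conjunct2[OF conjunct2[OF L]] by (rule spec)
qed

definition "gA C x v = 1 / line_tmax C x v"
definition "gB C x v = - 1 / line_tmin C x v"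

lemma ln_lt: "0 < (q::real) \<Longrightarrow> ln q < y \<longleftrightarrow> q < exp y"
  by (metis exp_gt_zero ln_exp ln_less_cancel_iff)

lemma inv_less: "0 < (a::real) \<Longrightarrow> 0 < g \<Longrightarrow> (1/a < 1/g) = (g < a)"
  by (simp add: field_simps)

lemma gAB_interval:
  fixes C :: "'a::euclidean_space set"
  assumes "bounded C" "open C" "convex C" "x \<in> C" "v \<noteq> 0"
  shows "gA C x v > 0" "gB C x v > 0"
    "x + t *\<^sub>R v \<in> C \<longleftrightarrow> -1 / gB C x v < t \<and> t < 1 / gA C x v"
proof -
  note L1 = line_interval'(1)[OF assms] and L2 = line_interval'(2)[OF assms]
    and L3 = line_interval'(3)[OF assms, of t]
  show "gA C x v > 0" "gB C x v > 0" using L1 L2 by (simp_all add: gA_def gB_def)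
  show "x + t *\<^sub>R v \<in> C \<longleftrightarrow> -1 / gB C x v < t \<and> t < 1 / gA C x v"
    unfolding L3 gA_def gB_def by simp
qed

lemma line_scale:
  fixes C :: "'a::euclidean_space set"
  assumes "bounded C" "open C" "convex C" "x \<in> C" "v \<noteq> 0" "s > 0"
  shows "line_tmin C x (s *\<^sub>R v) = line_tmin C x v / s \<and> line_tmax C x (s *\<^sub>R v) = line_tmax C x v / s"
proof -
  have sv: "s *\<^sub>R v \<noteq> 0" using assms by simp
  note L1 = line_interval'[OF assms(1-4) sv] and L2 = line_interval'[OF assms(1-5)]
  show ?thesis
  proof (rule interval_eq)
    fix t
    have "(line_tmin C x (s *\<^sub>R v) < t \<and> t < line_tmax C x (s *\<^sub>R v)) \<longleftrightarrow> x + (t * s) *\<^sub>R v \<in> C"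
      using L1(3)[of t] by simp
    also have "\<dots> \<longleftrightarrow> line_tmin C x v < t * s \<and> t * s < line_tmax C x v" by (rule L2(3))
    also have "\<dots> \<longleftrightarrow> line_tmin C x v / s < t \<and> t < line_tmax C x v / s"
      using assms(6) by (simp add: field_simps)
    finally show "(line_tmin C x (s *\<^sub>R v) < t \<and> t < line_tmax C x (s *\<^sub>R v)) \<longleftrightarrow> (line_tmin C x v / s < t \<and> t < line_tmax C x v / s)" .
  next
    show "line_tmin C x (s *\<^sub>R v) < line_tmax C x (s *\<^sub>R v)" using L1(1,2) by linarith
    show "line_tmin C x v / s < line_tmax C x v / s" using L2(1,2) assms(6) by (simp add: divide_strict_right_mono)
  qed
qed

lemma line_neg:
  fixes C :: "'a::euclidean_space set"
  assumes "bounded C" "open C" "convex C" "x \<in> C" "v \<noteq> 0"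
  shows "line_tmin C x (- v) = - line_tmax C x v \<and> line_tmax C x (- v) = - line_tmin C x v"
proof -
  have sv: "- v \<noteq> 0" using assms by simp
  note L1 = line_interval'[OF assms(1-4) sv] and L2 = line_interval'[OF assms(1-5)]
  show ?thesis
  proof (rule interval_eq)
    fix t
    have "(line_tmin C x (- v) < t \<and> t < line_tmax C x (- v)) \<longleftrightarrow> x + (- t) *\<^sub>R v \<in> C"
      using L1(3)[of t] by simp
    also have "\<dots> \<longleftrightarrow> line_tmin C x v < - t \<and> - t < line_tmax C x v" by (rule L2(3))
    also have "\<dots> \<longleftrightarrow> - line_tmax C x v < t \<and> t < - line_tmin C x v" by auto
    finally show "(line_tmin C x (- v) < t \<and> t < line_tmax C x (- v)) \<longleftrightarrow> (- line_tmax C x v < t \<and> t < - line_tmin C x v)" .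
  next
    show "line_tmin C x (- v) < line_tmax C x (- v)" using L1(1,2) by linarith
    show "- line_tmax C x v < - line_tmin C x v" using L2(1,2) by linarith
  qed
qed

lemma gAB_scale:
  fixes C :: "'a::euclidean_space set"
  assumes "bounded C" "open C" "convex C" "x \<in> C" "v \<noteq> 0" "s > 0"
  shows "gA C x (s *\<^sub>R v) = s * gA C x v \<and> gB C x (s *\<^sub>R v) = s * gB C x v"
  using line_scale[OF assms] assms(6) by (simp add: gA_def gB_def)

lemma dist_formula:
  fixes C :: "'a::euclidean_space set"
  assumes "bounded C" "open C" "convex C" "x \<in> C" "v \<noteq> 0" "x + v \<in> C"
  shows "gA C x v < 1 \<and> hilbert_dist C x (x + v) = ln ((1 + gB C x v) / (1 - gA C x v)) / 2"
proof -
  note L = line_interval'[OF assms(1-5)]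
  define m where "m = line_tmin C x v"
  define P where "P = line_tmax C x v"
  have "x + 1 *\<^sub>R v \<in> C" using assms(6) by simp
  then have "m < 1 \<and> 1 < P" unfolding L(3) m_def P_def .
  then have mP: "m < 0" "1 < P" using L(1) unfolding m_def P_def by auto
  have e1: "norm (x + v - (x + m *\<^sub>R v)) = (1 - m) * norm v"
  proof -
    have "x + v - (x + m *\<^sub>R v) = (1 - m) *\<^sub>R v" by (simp add: algebra_simps)
    then show ?thesis using mP by simp
  qed
  have e2: "norm (x - (x + m *\<^sub>R v)) = (- m) * norm v" using mP by simp
  have e3: "norm (x - (x + P *\<^sub>R v)) = P * norm v" using mP by simp
  have e4: "norm (x + v - (x + P *\<^sub>R v)) = (P - 1) * norm v"
  proof -
    have "x + v - (x + P *\<^sub>R v) = (1 - P) *\<^sub>R v" by (simp add: algebra_simps)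
    then show ?thesis using mP by simp
  qed
  have nv: "norm v > 0" using assms by simp
  have "((1 - m) * norm v / ((- m) * norm v)) * (P * norm v / ((P - 1) * norm v))
        = (1 + gB C x v) / (1 - gA C x v)"
    using mP nv unfolding gA_def gB_def m_def[symmetric] P_def[symmetric] by (simp add: field_simps)
  moreover have "gA C x v < 1" using mP unfolding gA_def P_def[symmetric] by simp
  moreover have xv: "x \<noteq> x + v" using assms(5) by simp
  have "hilbert_dist C x (x + v) = ln ((norm (x + v - (x + m *\<^sub>R v)) / norm (x - (x + m *\<^sub>R v))) * (norm (x - (x + P *\<^sub>R v)) / norm (x + v - (x + P *\<^sub>R v)))) / 2"
    unfolding hilbert_dist_def Let_def add_diff_cancel_left' m_def P_def if_not_P[OF xv] by (rule refl)
  ultimately show ?thesis unfolding e1 e2 e3 e4 by simp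
qed

lemma finsler_formula:
  fixes C :: "'a::euclidean_space set"
  assumes "bounded C" "open C" "convex C" "x \<in> C" "v \<noteq> 0"
  shows "finsler_norm C x v = (gA C x v + gB C x v) / 2"
proof -
  note L = line_interval'[OF assms(1-5)]
  define m where "m = line_tmin C x v"
  define P where "P = line_tmax C x v"
  have mP: "m < 0" "0 < P" using L(1,2) unfolding m_def P_def by auto
  have e2: "norm (x - (x + m *\<^sub>R v)) = (- m) * norm v" using mP by simp
  have e3: "norm (x - (x + P *\<^sub>R v)) = P * norm v" using mP by simp
  have nv: "norm v > 0" using assms by simp
  show ?thesis using assms(5) mP nv
    unfolding finsler_norm_def Let_def m_def[symmetric] P_def[symmetric] gA_def gB_def
    by (simp add: e2 e3 field_simps)
qed


lemma O_char:
  fixes C :: "'a::euclidean_space set"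
  assumes "bounded C" "open C" "convex C" "x \<in> C" "w \<noteq> 0" "a > 0" "b > 0"
  shows "(x + (1/a) *\<^sub>R w \<in> C \<and> x + (-1/b) *\<^sub>R w \<in> C) \<longleftrightarrow> gA C x w < a \<and> gB C x w < b"
proof -
  note L = gAB_interval[OF assms(1-5)]
  have "x + (1/a) *\<^sub>R w \<in> C \<longleftrightarrow> gA C x w < a"
  proof -
    have "x + (1/a) *\<^sub>R w \<in> C \<longleftrightarrow> -1 / gB C x w < 1/a \<and> 1/a < 1 / gA C x w" by (rule L(3))
    also have "\<dots> \<longleftrightarrow> 1/a < 1 / gA C x w"
    proof -
      have "0 < 1 / gB C x w" "0 < 1/a" using L(2) assms(6) by simp_all
      then have "-1 / gB C x w < 1/a" unfolding minus_divide_left[symmetric] by linarith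
      then show ?thesis by blast
    qed
    also have "\<dots> \<longleftrightarrow> gA C x w < a" using assms(6) L(1) by (rule inv_less)
    finally show ?thesis .
  qed
  moreover have "x + (-1/b) *\<^sub>R w \<in> C \<longleftrightarrow> gB C x w < b"
  proof -
    have "x + (-1/b) *\<^sub>R w \<in> C \<longleftrightarrow> -1 / gB C x w < -1/b \<and> -1/b < 1 / gA C x w" by (rule L(3))
    also have "\<dots> \<longleftrightarrow> 1/b < 1 / gB C x w"
    proof -
      have "0 < 1 / gA C x w" "0 < 1/b" using L(1) assms(7) by simp_all
      then have "-1/b < 1 / gA C x w" unfolding minus_divide_left[symmetric] by linarith
      moreover have "-1 / gB C x w < -1/b \<longleftrightarrow> 1/b < 1 / gB C x w" by simp
      ultimately show ?thesis by auto
    qed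
    also have "\<dots> \<longleftrightarrow> gB C x w < b" using assms(7) L(2) by (rule inv_less)
    finally show ?thesis .
  qed
  ultimately show ?thesis by blast
qed

lemma open_O:
  fixes C :: "'a::euclidean_space set"
  assumes "open C"
  shows "open {w. x + c *\<^sub>R (w - z) \<in> C \<and> x + d *\<^sub>R (w - z) \<in> C}"
proof -
  have "{w. x + c *\<^sub>R (w - z) \<in> C \<and> x + d *\<^sub>R (w - z) \<in> C} =
     (\<lambda>w. x + c *\<^sub>R (w - z)) -` C \<inter> (\<lambda>w. x + d *\<^sub>R (w - z)) -` C" by auto
  also have "open \<dots>"
    by (intro open_Int continuous_open_vimage[OF assms]) (intro continuous_intros)+
  finally show ?thesis .
qed

lemma TB_char:
  fixes C :: "'a::euclidean_space set"
  assumes "bounded C" "open C" "convex C" "x \<in> C" "u \<noteq> 0"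
  shows "u \<in> tangent_ball C x R \<longleftrightarrow> gA C x u + gB C x u < 2 * R"
proof -
  have "finsler_norm C x u = (gA C x u + gB C x u) / 2" by (rule finsler_formula[OF assms])
  then show ?thesis unfolding tangent_ball_def mem_Collect_eq by auto
qed

lemma HB_char:
  fixes C :: "'a::euclidean_space set"
  assumes "bounded C" "open C" "convex C" "x \<in> C" "v \<noteq> 0" "R > 0"
  shows "x + v \<in> hilbert_ball C x R \<longleftrightarrow> gB C x v + exp (2*R) * gA C x v < exp (2*R) - 1"
proof -
  note L = gAB_interval[OF assms(1-5)]
  define a where "a = gA C x v"
  define b where "b = gB C x v"
  define k where "k = exp (2*R)"
  have k1: "k > 1" using assms(6) by (simp add: k_def)
  have ab: "a > 0" "b > 0" using L(1,2) by (auto simp: a_def b_def)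
  have inC: "x + v \<in> C \<longleftrightarrow> a < 1"
  proof -
    have "x + v \<in> C \<longleftrightarrow> x + 1 *\<^sub>R v \<in> C" by simp
    also have "\<dots> \<longleftrightarrow> -1/b < 1 \<and> 1 < 1/a" unfolding a_def b_def by (rule L(3))
    also have "\<dots> \<longleftrightarrow> 1 < 1/a"
    proof -
      have "0 < 1/b" using ab by simp
      then have "-1/b < 1" unfolding minus_divide_left[symmetric] by linarith
      then show ?thesis by blast
    qed
    also have "\<dots> \<longleftrightarrow> a < 1" using ab by (simp add: less_divide_eq)
    finally show ?thesis .
  qed
  show ?thesis
  proof
    assume h: "x + v \<in> hilbert_ball C x R"
    then have xv: "x + v \<in> C" and d: "hilbert_dist C x (x + v) < R" by (auto simp: hilbert_ball_def)
    note D = dist_formula[OF assms(1-5) xv]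
    have a1: "a < 1" using D a_def by simp
    have Q: "(1 + b) / (1 - a) > 0" using ab a1 by simp
    have "ln ((1 + b) / (1 - a)) < 2 * R" using d D a_def b_def by simp
    then have "(1 + b) / (1 - a) < k" using ln_lt[OF Q] unfolding k_def by blast
    then have "1 + b < k * (1 - a)" using a1 by (simp add: divide_less_eq)
    then show "gB C x v + exp (2*R) * gA C x v < exp (2*R) - 1"
      unfolding a_def[symmetric] b_def[symmetric] k_def[symmetric] by (simp add: algebra_simps)
  next
    assume "gB C x v + exp (2*R) * gA C x v < exp (2*R) - 1"
    then have h: "b + k * a < k - 1" unfolding a_def b_def k_def .
    have a1: "a < 1"
    proof (rule ccontr)
      assume "\<not> a < 1"
      then have "k * a \<ge> k" using k1 by simp
      then show False using h ab by simp
    qed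
    then have xv: "x + v \<in> C" using inC by simp
    note D = dist_formula[OF assms(1-5) xv]
    have "1 + b < k * (1 - a)" using h by (simp add: algebra_simps)
    then have "(1 + b) / (1 - a) < k" using a1 by (simp add: divide_less_eq)
    moreover have Q: "(1 + b) / (1 - a) > 0" using ab a1 by simp
    ultimately have "ln ((1 + b) / (1 - a)) < 2 * R" using ln_lt[OF Q] unfolding k_def by blast
    then have "hilbert_dist C x (x + v) < R" using D a_def b_def by simp
    then show "x + v \<in> hilbert_ball C x R" using xv by (simp add: hilbert_ball_def)
  qed
qed


theorem proposition13:
  fixes C :: "'a::euclidean_space set" and x :: 'a and R :: real
  assumes "bounded C" and "open C" and "convex C"
    and "x \<in> C" and "R > 0"
  shows "((exp (2*R) - 1) / (2*R*exp (2*R))) ^ DIM('a)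
           \<le> measure lebesgue (hilbert_ball C x R) / measure lebesgue (tangent_ball C x R)
       \<and> measure lebesgue (hilbert_ball C x R) / measure lebesgue (tangent_ball C x R)
           \<le> ((exp (2*R) - 1) / (2*R)) ^ DIM('a)"
proof -
  define k where "k = exp (2*R)"
  define l1 where "l1 = (k - 1) / (2*R*k)"
  define l2 where "l2 = (k - 1) / (2*R)"
  define TB where "TB = tangent_ball C x R"
  define HB where "HB = hilbert_ball C x R"
  note H = assms(1-4)
  have k1: "k > 1" using assms(5) by (simp add: k_def)
  have l1p: "l1 > 0" and l2p: "l2 > 0" using k1 assms(5) by (simp_all add: l1_def l2_def)
  have zTB: "0 \<in> TB" using assms(5) by (simp add: TB_def tangent_ball_def finsler_norm_def)
  have xHB: "x \<in> HB" using assms(4,5) by (simp add: HB_def hilbert_ball_def hilbert_dist_def)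
  have I1: "(\<lambda>u. l1 *\<^sub>R u + x) ` TB \<subseteq> HB"
  proof
    fix y assume "y \<in> (\<lambda>u. l1 *\<^sub>R u + x) ` TB"
    then obtain u where u: "u \<in> TB" "y = l1 *\<^sub>R u + x" by blast
    show "y \<in> HB"
    proof (cases "u = 0")
      case True then show ?thesis using u xHB by simp
    next
      case False
      have w0: "l1 *\<^sub>R u \<noteq> 0" using False l1p by simp
      have s: "gA C x (l1 *\<^sub>R u) = l1 * gA C x u \<and> gB C x (l1 *\<^sub>R u) = l1 * gB C x u"
        by (rule gAB_scale[OF H False l1p])
      have lt: "gA C x u + gB C x u < 2*R" using u(1) TB_char[OF H False] by (simp add: TB_def)
      have pa: "gA C x u > 0" "gB C x u > 0" using gAB_interval(1,2)[OF H False] .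
      have "l1 * gB C x u + k * (l1 * gA C x u) < k - 1"
      proof -
        have e: "l1 * k * (gA C x u + gB C x u) - (l1 * gB C x u + k * (l1 * gA C x u)) = (k - 1) * (l1 * gB C x u)"
          by (simp add: algebra_simps)
        have "0 \<le> (k - 1) * (l1 * gB C x u)" using k1 l1p pa by simp
        then have "l1 * gB C x u + k * (l1 * gA C x u) \<le> l1 * k * (gA C x u + gB C x u)" using e by linarith
        also have "\<dots> < l1 * k * (2*R)" using lt l1p k1 by simp
        also have "\<dots> = k - 1" using assms(5) k1 by (simp add: l1_def)
        finally show ?thesis .
      qed
      then have "x + l1 *\<^sub>R u \<in> HB" using HB_char[OF H w0 assms(5)] s by (simp add: HB_def k_def)
      then show ?thesis using u(2) by (simp add: add.commute)
    qed
  qed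
  have I2: "HB \<subseteq> (\<lambda>u. l2 *\<^sub>R u + x) ` TB"
  proof
    fix y assume y: "y \<in> HB"
    define v where "v = y - x"
    have yv: "y = x + v" by (simp add: v_def)
    show "y \<in> (\<lambda>u. l2 *\<^sub>R u + x) ` TB"
    proof (cases "v = 0")
      case True
      then have "y = l2 *\<^sub>R 0 + x" using yv by simp
      then show ?thesis using zTB by blast
    next
      case False
      have h: "gB C x v + k * gA C x v < k - 1" using y HB_char[OF H False assms(5)] yv by (simp add: HB_def k_def)
      define u where "u = (1/l2) *\<^sub>R v"
      have il: "1/l2 > 0" using l2p by simp
      have s: "gA C x u = (1/l2) * gA C x v \<and> gB C x u = (1/l2) * gB C x v"
        unfolding u_def by (rule gAB_scale[OF H False il])
      have pa: "gA C x v > 0" "gB C x v > 0" using gAB_interval(1,2)[OF H False] .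
      have "gA C x v \<le> k * gA C x v" using k1 pa by simp
      then have "gA C x v + gB C x v < k - 1" using h by linarith
      then have "(1/l2) * (gA C x v + gB C x v) < (1/l2) * (k - 1)" by (rule mult_strict_left_mono[OF _ il])
      also have "(1/l2) * (k - 1) = 2 * R" using k1 assms(5) by (simp add: l2_def)
      finally have "gA C x u + gB C x u < 2 * R" using s by (simp add: algebra_simps)
      moreover have u0: "u \<noteq> 0" using False l2p by (simp add: u_def)
      ultimately have "u \<in> TB" using TB_char[OF H u0] by (simp add: TB_def)
      moreover have "y = l2 *\<^sub>R u + x" using yv l2p by (simp add: u_def)
      ultimately show ?thesis by blast
    qed
  qed
  have oTB: "open TB"
    unfolding open_subopen[of TB]
  proof
    fix u assume u: "u \<in> TB"
    have sub: "{w. x + (1/a) *\<^sub>R (w - 0) \<in> C \<and> x + (-1/b) *\<^sub>R (w - 0) \<in> C} \<subseteq> TB"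
      if ab: "a > 0" "b > 0" "a + b \<le> 2 * R" for a b
    proof
      fix w assume w: "w \<in> {w. x + (1/a) *\<^sub>R (w - 0) \<in> C \<and> x + (-1/b) *\<^sub>R (w - 0) \<in> C}"
      show "w \<in> TB"
      proof (cases "w = 0")
        case True then show ?thesis using zTB by simp
      next
        case False
        have "gA C x w < a \<and> gB C x w < b" using w O_char[OF H False ab(1,2)] by simp
        then show ?thesis using TB_char[OF H False] ab(3) by (simp add: TB_def)
      qed
    qed
    show "\<exists>T. open T \<and> u \<in> T \<and> T \<subseteq> TB"
    proof (cases "u = 0")
      case True
      have "u \<in> {w. x + (1/R) *\<^sub>R (w - 0) \<in> C \<and> x + (-1/R) *\<^sub>R (w - 0) \<in> C}" using True assms(4) by simp
      moreover have "open {w. x + (1/R) *\<^sub>R (w - 0) \<in> C \<and> x + (-1/R) *\<^sub>R (w - 0) \<in> C}"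
        by (rule open_O[OF assms(2)])
      ultimately show ?thesis using sub[of R R] assms(5) by auto
    next
      case False
      have lt: "gA C x u + gB C x u < 2*R" using u TB_char[OF H False] by (simp add: TB_def)
      define e where "e = (2*R - gA C x u - gB C x u) / 2"
      have e0: "e > 0" using lt by (simp add: e_def)
      have pa: "gA C x u > 0" "gB C x u > 0" using gAB_interval(1,2)[OF H False] .
      have ab12: "gA C x u + e > 0" "gB C x u + e > 0" using pa e0 by linarith+
      have ab3: "(gA C x u + e) + (gB C x u + e) \<le> 2 * R" unfolding e_def by (simp add: field_simps)
      note ab = ab12 ab3
      have "x + (1/(gA C x u + e)) *\<^sub>R u \<in> C \<and> x + (-1/(gB C x u + e)) *\<^sub>R u \<in> C"
        using O_char[OF H False ab(1,2)] e0 by simp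
      then have "u \<in> {w. x + (1/(gA C x u + e)) *\<^sub>R (w - 0) \<in> C \<and> x + (-1/(gB C x u + e)) *\<^sub>R (w - 0) \<in> C}"
        by simp
      moreover have "open {w. x + (1/(gA C x u + e)) *\<^sub>R (w - 0) \<in> C \<and> x + (-1/(gB C x u + e)) *\<^sub>R (w - 0) \<in> C}"
        by (rule open_O[OF assms(2)])
      ultimately show ?thesis using sub[OF ab] by auto
    qed
  qed
  have oHB: "open HB"
    unfolding open_subopen[of HB]
  proof
    fix y assume y: "y \<in> HB"
    have sub: "{w. x + (1/a) *\<^sub>R (w - x) \<in> C \<and> x + (-1/b) *\<^sub>R (w - x) \<in> C} \<subseteq> HB"
      if ab: "a > 0" "b > 0" "b + k * a \<le> k - 1" for a b
    proof
      fix w assume w: "w \<in> {w. x + (1/a) *\<^sub>R (w - x) \<in> C \<and> x + (-1/b) *\<^sub>R (w - x) \<in> C}"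
      show "w \<in> HB"
      proof (cases "w - x = 0")
        case True then show ?thesis using xHB by simp
      next
        case False
        have "gA C x (w - x) < a \<and> gB C x (w - x) < b" using w O_char[OF H False ab(1,2)] by simp
        then have "k * gA C x (w - x) < k * a" using k1 by simp
        then have "gB C x (w - x) + k * gA C x (w - x) < k - 1" using ab(3) \<open>gA C x (w - x) < a \<and> gB C x (w - x) < b\<close>
          by linarith
        then have "x + (w - x) \<in> HB" using HB_char[OF H False assms(5)] by (simp add: HB_def k_def)
        then show ?thesis by simp
      qed
    qed
    show "\<exists>T. open T \<and> y \<in> T \<and> T \<subseteq> HB"
    proof (cases "y - x = 0")
      case True
      define a where "a = (k - 1) / (k + 1)"
      have a1: "a > 0" using k1 by (simp add: a_def)
      have "a + k * a = (1 + k) * a" by (simp add: algebra_simps)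
      also have "\<dots> = k - 1" using k1 unfolding a_def by (simp add: add.commute[of 1 k])
      finally have a: "a > 0" "a + k * a \<le> k - 1" using a1 by simp_all
      have "y \<in> {w. x + (1/a) *\<^sub>R (w - x) \<in> C \<and> x + (-1/a) *\<^sub>R (w - x) \<in> C}" using True assms(4) by simp
      moreover have "open {w. x + (1/a) *\<^sub>R (w - x) \<in> C \<and> x + (-1/a) *\<^sub>R (w - x) \<in> C}"
        by (rule open_O[OF assms(2)])
      ultimately show ?thesis using sub[OF a(1) a(1) a(2)] by auto
    next
      case False
      have yv: "y = x + (y - x)" by simp
      have h: "gB C x (y - x) + k * gA C x (y - x) < k - 1"
        using y HB_char[OF H False assms(5)] yv by (simp add: HB_def k_def)
      define e where "e = (k - 1 - (gB C x (y - x) + k * gA C x (y - x))) / (1 + k)"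
      have e0: "e > 0" using h k1 by (simp add: e_def)
      have pa: "gA C x (y - x) > 0" "gB C x (y - x) > 0" using gAB_interval(1,2)[OF H False] .
      have ee: "e * (1 + k) = k - 1 - (gB C x (y - x) + k * gA C x (y - x))"
        using k1 by (simp add: e_def)
      have ab: "gA C x (y - x) + e > 0" "gB C x (y - x) + e > 0"
        "(gB C x (y - x) + e) + k * (gA C x (y - x) + e) \<le> k - 1"
        using pa e0 ee by (auto simp: algebra_simps)
      have "x + (1/(gA C x (y - x) + e)) *\<^sub>R (y - x) \<in> C \<and> x + (-1/(gB C x (y - x) + e)) *\<^sub>R (y - x) \<in> C"
        using O_char[OF H False ab(1,2)] e0 by simp
      then have "y \<in> {w. x + (1/(gA C x (y - x) + e)) *\<^sub>R (w - x) \<in> C \<and> x + (-1/(gB C x (y - x) + e)) *\<^sub>R (w - x) \<in> C}"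
        by simp
      moreover have "open {w. x + (1/(gA C x (y - x) + e)) *\<^sub>R (w - x) \<in> C \<and> x + (-1/(gB C x (y - x) + e)) *\<^sub>R (w - x) \<in> C}"
        by (rule open_O[OF assms(2)])
      ultimately show ?thesis using sub[OF ab] by auto
    qed
  qed
  obtain B0 where B0: "B0 > 0" "\<And>y. y \<in> C \<Longrightarrow> norm y \<le> B0" using assms(1) bounded_pos by blast
  have TBb: "TB \<subseteq> cball 0 (4 * R * B0)"
  proof
    fix u assume u: "u \<in> TB"
    show "u \<in> cball 0 (4 * R * B0)"
    proof (cases "u = 0")
      case True then show ?thesis using B0 assms(5) by simp
    next
      case False
      have lt: "gA C x u + gB C x u < 2*R" using u TB_char[OF H False] by (simp add: TB_def)
      have pa: "gA C x u > 0" "gB C x u > 0" using gAB_interval(1,2)[OF H False] .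
      have r0: "0 < 1/(2*R)" using assms(5) by simp
      have "1/(2*R) < 1 / gA C x u" using inv_less[of "2*R" "gA C x u"] lt pa assms(5) by simp
      moreover have "-1 / gB C x u < 1/(2*R)"
      proof -
        have "0 < 1 / gB C x u" using pa by simp
        then show ?thesis using r0 unfolding minus_divide_left[symmetric] by linarith
      qed
      ultimately have inC: "x + (1/(2*R)) *\<^sub>R u \<in> C" unfolding gAB_interval(3)[OF H False] by blast
      have "norm ((1/(2*R)) *\<^sub>R u) \<le> norm (x + (1/(2*R)) *\<^sub>R u) + norm x"
        by (metis add_diff_cancel_left' norm_triangle_ineq4 add.commute)
      also have "\<dots> \<le> 2 * B0" using B0(2)[OF inC] B0(2)[OF assms(4)] by simp
      finally have "norm u / (2*R) \<le> 2 * B0" using assms(5) by simp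
      then have "norm u \<le> 4 * R * B0" using assms(5) by (simp add: field_simps)
      then show ?thesis by simp
    qed
  qed
  have bTB: "bounded TB" by (rule bounded_subset[OF bounded_cball TBb])
  have mTB: "TB \<in> lmeasurable" using lmeasurable_open[OF bTB oTB] .
  have "HB \<subseteq> C" by (auto simp: HB_def hilbert_ball_def)
  then have bHB: "bounded HB" by (rule bounded_subset[OF assms(1)])
  have mHB: "HB \<in> lmeasurable" using lmeasurable_open[OF bHB oHB] .
  obtain r where r: "r > 0" "ball x r \<subseteq> C" using open_contains_ball[THEN iffD1, OF assms(2), rule_format, OF assms(4)] by blast
  have ballTB: "ball 0 (r * R) \<subseteq> TB"
  proof
    fix w :: 'a assume w: "w \<in> ball 0 (r * R)"
    show "w \<in> TB"
    proof (cases "w = 0")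
      case True then show ?thesis using zTB by simp
    next
      case False
      have nw: "norm w / R < r" using w assms(5) by (simp add: field_simps)
      have "x + (1/R) *\<^sub>R w \<in> ball x r" using nw assms(5) by (simp add: dist_norm)
      moreover have "x + (-1/R) *\<^sub>R w \<in> ball x r" using nw assms(5) by (simp add: dist_norm)
      ultimately have "x + (1/R) *\<^sub>R w \<in> C \<and> x + (-1/R) *\<^sub>R w \<in> C" using r(2) by blast
      then have "gA C x w < R \<and> gB C x w < R" by (rule O_char[OF H False assms(5) assms(5), THEN iffD1])
      then show ?thesis using TB_char[OF H False] by (simp add: TB_def)
    qed
  qed
  have mT0: "0 < measure lebesgue TB"
  proof -
    have "0 < measure lebesgue (ball (0::'a) (r * R))" using content_ball_pos[of "r * R"] r(1) assms(5) by simp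
    also have "\<dots> \<le> measure lebesgue TB"
      by (rule measure_mono_fmeasurable[OF ballTB]) (use mTB in auto)
    finally show ?thesis .
  qed
  have img: "(\<lambda>u. l *\<^sub>R u + x) ` TB = (\<lambda>u. x + l *\<^sub>R u) ` TB" for l
    by (rule image_cong) (auto simp: add.commute)
  have oimg: "open ((\<lambda>u. l *\<^sub>R u + x) ` TB)" if "l > 0" for l
    unfolding img using open_affinity[OF oTB, of l x] that by simp
  have mimg1: "(\<lambda>u. l1 *\<^sub>R u + x) ` TB \<in> lmeasurable"
    by (rule lmeasurable_open[OF bounded_subset[OF bHB I1] oimg[OF l1p]])
  have bimg2: "bounded ((\<lambda>u. l2 *\<^sub>R u + x) ` TB)"
  proof (rule bounded_subset[OF bounded_cball[of x "l2 * (4 * R * B0)"]])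
    show "(\<lambda>u. l2 *\<^sub>R u + x) ` TB \<subseteq> cball x (l2 * (4 * R * B0))"
    proof
      fix y assume "y \<in> (\<lambda>u. l2 *\<^sub>R u + x) ` TB"
      then obtain u where u: "u \<in> TB" "y = l2 *\<^sub>R u + x" by blast
      have "norm u \<le> 4 * R * B0" using TBb u(1) by auto
      then have "l2 * norm u \<le> l2 * (4 * R * B0)" using l2p by simp
      then show "y \<in> cball x (l2 * (4 * R * B0))" using u(2) l2p by (simp add: dist_norm)
    qed
  qed
  have mimg2: "(\<lambda>u. l2 *\<^sub>R u + x) ` TB \<in> lmeasurable"
    by (rule lmeasurable_open[OF bimg2 oimg[OF l2p]])
  have lo: "l1 ^ DIM('a) * measure lebesgue TB \<le> measure lebesgue HB"
  proof -
    have "l1 ^ DIM('a) * measure lebesgue TB = measure lebesgue ((\<lambda>u. l1 *\<^sub>R u + x) ` TB)"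
      using measure_lebesgue_affine[of l1 x TB] l1p by simp
    also have "\<dots> \<le> measure lebesgue HB"
      by (rule measure_mono_fmeasurable[OF I1]) (use mimg1 mHB in auto)
    finally show ?thesis .
  qed
  have hi: "measure lebesgue HB \<le> l2 ^ DIM('a) * measure lebesgue TB"
  proof -
    have "measure lebesgue HB \<le> measure lebesgue ((\<lambda>u. l2 *\<^sub>R u + x) ` TB)"
      by (rule measure_mono_fmeasurable[OF I2]) (use mimg2 mHB in auto)
    also have "\<dots> = l2 ^ DIM('a) * measure lebesgue TB"
      using measure_lebesgue_affine[of l2 x TB] l2p by simp
    finally show ?thesis .
  qed
  have "l1 ^ DIM('a) \<le> measure lebesgue HB / measure lebesgue TB"
    using lo mT0 by (simp add: pos_le_divide_eq)
  moreover have "measure lebesgue HB / measure lebesgue TB \<le> l2 ^ DIM('a)"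
    using hi mT0 by (simp add: pos_divide_le_eq)
  ultimately show ?thesis unfolding l1_def l2_def k_def TB_def HB_def by blast
qed
end
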